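(* Let $n \in \mathbb{Z}_{>0}$ and $m \in \mathbb{Z}_{\geq 0}$, and let $f$ be the bijection described in the context. Then \[ f\left(\bigsqcup_{\mu \leq (2m)^n} \mathrm{SSYT}(\mu,n)\right) = \left\{ ((T,\lambda),t) \in \bigsqcup_{\lambda \leq (2m)^n \colon \text{even} } \mathrm{SSYT}(\lambda,n) \times \{0,1\}^n \;\middle|\; t^{-1}(1) \subseteq S(T) \right\}, \] where the right-hand side is in bijection with $\displaystyle \bigsqcup_{(T,\lambda) \in \bigsqcup_{\lambda \leq (2m)^n \colon \text{even} } \mathrm{SSYT}(\lambda,n)} \{0,1\}^{S(T)}$.
   Context: Let $n \in \mathbb{Z}_{>0}$ and $m \in \mathbb{Z}_{\geq 0}$. For a partition $\lambda$ with at most $n$ parts, $\mathrm{SSYT}(\lambda,n)$ denotes the set of semi-standard Young tableaux of shape $\lambda$ with entries in $\{1,2,\ldots,n\}$, using the convention that entries are weakly decreasing along rows and strictly decreasing down columns. For partitions $\lambda,\mu$ with $n$ parts, $\lambda \leq \mu$ means $\lambda_i \leq \mu_i$ for all $i$; $(k)^n=(k,k,\ldots,k)$; a partition is even if all its parts are even. Row insertion $T \leftarrow x$ (for a tableau $T$ and positive integer $x$): starting from the first row, insert $x$ into the row by replacing (bumping) the leftmost entry $y$ strictly less than $x$, then insert $y$ into the next row in the same manner; if no such entry exists in a row, place $x$ at the end of that row and stop. Fact used: if $U$ is a tableau of shape $\mu$ and $\lambda \leq \mu$ with $\mu\setminus\lambda$ having at most one box in each row, $p=\#(\mu\setminus\lambda)$,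 then there exist a unique tableau $T$ of shape $\lambda$ and integers $x_1<x_2<\cdots<x_p$ with $U = (((T \leftarrow x_1) \leftarrow x_2) \leftarrow \cdots) \leftarrow x_p$ (obtained by repeatedly applying reverse row insertion to the boxes of $\mu\setminus\lambda$ from bottom to top). The bijection $f \colon \bigsqcup_{\mu \leq (2m+1)^n} \mathrm{SSYT}(\mu,n) \to \bigsqcup_{\lambda \leq (2m)^n \colon \text{even}} \mathrm{SSYT}(\lambda,n) \times \{0,1\}^n$ is defined as follows: for $(U,\mu)$, let $\lambda$ be the even partition with $\lambda_i \in \{\mu_i,\mu_i-1\}$; take the unique $T \in \mathrm{SSYT}(\lambda,n)$ and $x_1<\cdots<x_p \leq n$ with $U = (((T \leftarrow x_1) \leftarrow x_2) \leftarrow \cdots) \leftarrow x_p$; define $t(i)=1$ if $i \in \{x_1,\ldots,x_p\}$ and $t(i)=0$ otherwise; set $f((U,\mu)) = ((T,\lambda),t)$. Its inverse sends $((T,\lambda),t)$ to $(U,\mathrm{shape}(U))$ with $U = (((T \leftarrow x_1) \leftarrow \cdots) \leftarrow x_p)$, $\{x_1<\cdots<x_p\}=t^{-1}(1)$. For $T \in \mathrm{SSYT}(\lambda,n)$ with $\lambda \leq (2m)^n$ even, $S(T) := \{T_{1,2m}+1, T_{1,2m}+2, \ldots, n\}$, where $T_{1,2m}:=0$ if $\lambda_1 < 2m$. (Equivalently, $S(T)=\{1\le j\le n \mid \pi'_{1,j}\ne 2m\}$ where $\pi'$ is the even symmetric plane partition (shifted staircase plane partition of size $n$ with entries $\le 2m$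 and even diagonal entries) whose row-wise conjugate is $T$.) *)

theory Defs
  imports "HOL-Library.FuncSet"
begin

text \<open>A partition with (at most) n parts is a list of length n of
  weakly decreasing naturals (zeros allowed). A tableau is a list of rows (row i is
  the list of entries in row i+1, read left to right); its shape is the list of row
  lengths. Entries are in 1..n, weakly decreasing along rows and strictly
  decreasing down columns.\<close>

definition is_partition :: "nat \<Rightarrow> nat list \<Rightarrow> bool" where
  "is_partition n lam \<longleftrightarrow> length lam = n \<and>
     (\<forall>i. Suc i < n \<longrightarrow> lam ! Suc i \<le> lam ! i)"

definition bounded_by :: "nat list \<Rightarrow> nat \<Rightarrow> bool" where
  "bounded_by lam k \<longleftrightarrow> (\<forall>i < length lam. lam ! i \<le> k)"

definition even_partition :: "nat list \<Rightarrow> bool" where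
  "even_partition lam \<longleftrightarrow> (\<forall>i < length lam. even (lam ! i))"

definition SSYT :: "nat list \<Rightarrow> nat \<Rightarrow> nat list list set" where
  "SSYT lam n = {T. length T = length lam
     \<and> (\<forall>i < length T. length (T ! i) = lam ! i)
     \<and> (\<forall>i < length T. \<forall>j < length (T ! i). 1 \<le> T ! i ! j \<and> T ! i ! j \<le> n)
     \<and> (\<forall>i < length T. \<forall>j. Suc j < length (T ! i) \<longrightarrow> T ! i ! Suc j \<le> T ! i ! j)
     \<and> (\<forall>i. Suc i < length T \<longrightarrow> (\<forall>j < length (T ! Suc i).
            j < length (T ! i) \<and> T ! Suc i ! j < T ! i ! j))}"

fun row_insert :: "nat list \<Rightarrow> nat \<Rightarrow> nat list \<times> nat option" where
  "row_insert [] x = ([x], None)"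
| "row_insert (y # ys) x =
     (if y < x then (x # ys, Some y)
      else (let (r, b) = row_insert ys x in (y # r, b)))"

fun tab_insert :: "nat list list \<Rightarrow> nat \<Rightarrow> nat list list" where
  "tab_insert [] x = [[x]]"
| "tab_insert (r # rs) x =
     (case row_insert r x of
        (r', None) \<Rightarrow> r' # rs
      | (r', Some y) \<Rightarrow> r' # tab_insert rs y)"

definition insert_all :: "nat list list \<Rightarrow> nat list \<Rightarrow> nat list list" where
  "insert_all T xs = foldl tab_insert T xs"

definition even_part_of :: "nat list \<Rightarrow> nat list" where
  "even_part_of mu = map (\<lambda>k. 2 * (k div 2)) mu"

definition ones :: "nat \<Rightarrow> (nat \<Rightarrow> nat) \<Rightarrow> nat set" where
  "ones n t = {i \<in> {1..n}. t i = 1}"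

definition f_map :: "nat \<Rightarrow> nat list list \<times> nat list \<Rightarrow> (nat list list \<times> nat list) \<times> (nat \<Rightarrow> nat)" where
  "f_map n Umu = (THE r. case r of ((T, lam), t) \<Rightarrow>
       lam = even_part_of (snd Umu) \<and> T \<in> SSYT lam n \<and> t \<in> {1..n} \<rightarrow>\<^sub>E {0, 1}
       \<and> fst Umu = insert_all T (sorted_list_of_set (ones n t)))"

text \<open>S(T) = {T_{1,2m}+1, ..., n}, with T_{1,2m} := 0 if lambda_1 < 2m.
  For m = 0 (lambda_1 = 0 = 2m) we use T_{1,0} := n, so S(T) is empty, matching
  the equivalent description S(T) = {j | pi'_{1,j} \<noteq> 2m}.\<close>
definition S_set :: "nat \<Rightarrow> nat \<Rightarrow> nat list list \<Rightarrow> nat set" where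
  "S_set n m T =
     (if m = 0 then {}
      else if length (T ! 0) < 2 * m then {1..n}
      else {T ! 0 ! (2 * m - 1) + 1 .. n})"

definition LHS_dom :: "nat \<Rightarrow> nat \<Rightarrow> (nat list list \<times> nat list) set" where
  "LHS_dom n m = {(U, mu). is_partition n mu \<and> bounded_by mu (2 * m) \<and> U \<in> SSYT mu n}"

definition even_tabs :: "nat \<Rightarrow> nat \<Rightarrow> (nat list list \<times> nat list) set" where
  "even_tabs n m = {(T, lam). is_partition n lam \<and> bounded_by lam (2 * m)
       \<and> even_partition lam \<and> T \<in> SSYT lam n}"

end

theory Submission
  imports Defs
begin


definition desc :: "nat list \<Rightarrow> bool" where
  "desc r \<longleftrightarrow> (\<forall>j. Suc j < length r \<longrightarrow> r ! Suc j \<le> r ! j)"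

lemma desc_le: "desc r \<Longrightarrow> i \<le> j \<Longrightarrow> j < length r \<Longrightarrow> r ! j \<le> r ! i"
proof (induction j)
  case 0 then show ?case by simp
next
  case (Suc j)
  then show ?case unfolding desc_def
    by (metis Suc_lessD le_Suc_eq order.trans order_refl)
qed

definition domr :: "nat list \<Rightarrow> nat list \<Rightarrow> bool" where
  "domr r b \<longleftrightarrow> length b \<le> length r \<and> (\<forall>j < length b. b ! j < r ! j)"

definition ssyt :: "nat list list \<Rightarrow> bool" where
  "ssyt T \<longleftrightarrow> (\<forall>i < length T. desc (T ! i)) \<and> (\<forall>i. Suc i < length T \<longrightarrow> domr (T ! i) (T ! Suc i))"

definition hd' :: "nat list list \<Rightarrow> nat list" where
  "hd' rs = (case rs of [] \<Rightarrow> [] | r # _ \<Rightarrow> r)"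

lemma hd'_simps[simp]: "hd' [] = []" "hd' (r # rs) = r" by (simp_all add: hd'_def)

lemma ssyt_Nil[simp]: "ssyt []" by (simp add: ssyt_def)

lemma ssyt_Cons: "ssyt (r # rs) \<longleftrightarrow> desc r \<and> ssyt rs \<and> domr r (hd' rs)"
proof (cases rs)
  case Nil
  then show ?thesis by (simp add: ssyt_def domr_def)
next
  case (Cons b bs)
  have A: "(\<forall>i < length (r # rs). desc ((r # rs) ! i)) \<longleftrightarrow> desc r \<and> (\<forall>i < length rs. desc (rs ! i))"
    by (auto simp: less_Suc_eq_0_disj)
  have B: "(\<forall>i. Suc i < length (r # rs) \<longrightarrow> domr ((r # rs) ! i) ((r # rs) ! Suc i)) \<longleftrightarrow>
       domr r (hd' rs) \<and> (\<forall>i. Suc i < length rs \<longrightarrow> domr (rs ! i) (rs ! Suc i))"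
  proof
    assume H: "\<forall>i. Suc i < length (r # rs) \<longrightarrow> domr ((r # rs) ! i) ((r # rs) ! Suc i)"
    have "domr r (hd' rs)" using H[rule_format, of 0] Cons by simp
    moreover have "\<forall>i. Suc i < length rs \<longrightarrow> domr (rs ! i) (rs ! Suc i)"
      using H by (metis Suc_less_eq length_Cons nth_Cons_Suc)
    ultimately show "domr r (hd' rs) \<and> (\<forall>i. Suc i < length rs \<longrightarrow> domr (rs ! i) (rs ! Suc i))" by blast
  next
    assume H: "domr r (hd' rs) \<and> (\<forall>i. Suc i < length rs \<longrightarrow> domr (rs ! i) (rs ! Suc i))"
    show "\<forall>i. Suc i < length (r # rs) \<longrightarrow> domr ((r # rs) ! i) ((r # rs) ! Suc i)"
    proof (intro allI impI)
      fix i assume "Suc i < length (r # rs)"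
      then show "domr ((r # rs) ! i) ((r # rs) ! Suc i)"
        using H Cons by (cases i) auto
    qed
  qed
  show ?thesis unfolding ssyt_def A B by blast
qed

definition cnt :: "nat list \<Rightarrow> nat \<Rightarrow> nat" where
  "cnt r x = length (takeWhile (\<lambda>z. x \<le> z) r)"

lemma row_insert_closed:
  "row_insert r x = (if cnt r x < length r then (r[cnt r x := x], Some (r ! cnt r x)) else (r @ [x], None))"
  by (induction r) (auto simp: cnt_def split: prod.splits)

lemma cnt_le: "cnt r x \<le> length r" by (simp add: cnt_def length_takeWhile_le)

lemma cnt_before: "p < cnt r x \<Longrightarrow> x \<le> r ! p"
  unfolding cnt_def by (metis nth_mem set_takeWhileD takeWhile_nth)

lemma cnt_at: "cnt r x < length r \<Longrightarrow> r ! cnt r x < x"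
  unfolding cnt_def using nth_length_takeWhile not_le by metis

lemma cnt_after: "desc r \<Longrightarrow> cnt r x \<le> p \<Longrightarrow> p < length r \<Longrightarrow> r ! p < x"
  using cnt_at desc_le by (metis le_less_trans le_trans cnt_le)


lemma desc_row_insert: "desc r \<Longrightarrow> desc (fst (row_insert r x))"
proof -
  assume d: "desc r"
  let ?k = "cnt r x"
  show ?thesis
  proof (cases "?k < length r")
    case True
    have "desc (r[?k := x])" unfolding desc_def
    proof (intro allI impI)
      fix j assume j: "Suc j < length (r[?k := x])"
      show "r[?k := x] ! Suc j \<le> r[?k := x] ! j"
      proof (cases "Suc j = ?k")
        case True
        then show ?thesis using j cnt_before[of j r x] by simp
      next
        case False
        show ?thesis
        proof (cases "j = ?k")
          case True
          have "r ! Suc ?k \<le> r ! ?k" using j True d[unfolded desc_def] by simp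
          then show ?thesis using j True cnt_at[of r x] by simp
        next
          case False
          then show ?thesis using \<open>Suc j \<noteq> ?k\<close> j d[unfolded desc_def] by simp
        qed
      qed
    qed
    then show ?thesis using True by (simp add: row_insert_closed)
  next
    case False
    then have k: "?k = length r" using cnt_le[of r x] by simp
    have "desc (r @ [x])" unfolding desc_def
    proof (intro allI impI)
      fix j assume j: "Suc j < length (r @ [x])"
      show "(r @ [x]) ! Suc j \<le> (r @ [x]) ! j"
      proof (cases "Suc j = length r")
        case True
        then show ?thesis using cnt_before[of j r x] k by (simp add: nth_append)
      next
        case False
        then show ?thesis using j d[unfolded desc_def] by (simp add: nth_append)
      qed
    qed
    then show ?thesis using False by (simp add: row_insert_closed)
  qed
qed

lemma domr_bump:
  assumes dr: "desc r" and db: "desc b" and dm: "domr r b" and k: "cnt r x < length r"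
  shows "domr (r[cnt r x := x]) (fst (row_insert b (r ! cnt r x)))"
proof -
  let ?k = "cnt r x" and ?y = "r ! cnt r x"
  let ?k' = "cnt b ?y"
  have yx: "?y < x" using cnt_at k by blast
  have kk: "?k' \<le> ?k"
  proof (cases "?k < length b")
    case True
    then have "b ! ?k < ?y" using dm unfolding domr_def by blast
    then show ?thesis using cnt_before[of ?k b ?y] by (meson not_le not_less)
  next
    case False
    then show ?thesis using cnt_le[of b ?y] by linarith
  qed
  have newval: "?y < r[?k := x] ! ?k'"
  proof (cases "?k' = ?k")
    case True
    then show ?thesis using k yx by simp
  next
    case False
    then have "?k' < ?k" using kk by simp
    then show ?thesis using cnt_before[of ?k' r x] yx by simp
  qed
  have ge: "\<And>p. p < length r \<Longrightarrow> r ! p \<le> r[?k := x] ! p"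
    using yx by (case_tac "p = ?k") auto
  show ?thesis
  proof (cases "?k' < length b")
    case True
    have "domr (r[?k := x]) (b[?k' := ?y])" unfolding domr_def
    proof (intro conjI allI impI)
      show "length (b[?k' := ?y]) \<le> length (r[?k := x])" using dm by (simp add: domr_def)
    next
      fix p assume p: "p < length (b[?k' := ?y])"
      show "b[?k' := ?y] ! p < r[?k := x] ! p"
      proof (cases "p = ?k'")
        case True then show ?thesis using newval p by simp
      next
        case False
        then have "b[?k' := ?y] ! p = b ! p" by simp
        also have "\<dots> < r ! p" using dm p unfolding domr_def by simp
        also have "\<dots> \<le> r[?k := x] ! p" using ge p dm unfolding domr_def by simp
        finally show ?thesis .
      qed
    qed
    then show ?thesis using True by (simp add: row_insert_closed)
  next
    case False
    then have kl: "?k' = length b" using cnt_le[of b ?y] by simp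
    have "domr (r[?k := x]) (b @ [?y])" unfolding domr_def
    proof (intro conjI allI impI)
      show "length (b @ [?y]) \<le> length (r[?k := x])" using kl kk k by simp
    next
      fix p assume p: "p < length (b @ [?y])"
      show "(b @ [?y]) ! p < r[?k := x] ! p"
      proof (cases "p = length b")
        case True then show ?thesis using newval kl by (simp add: nth_append)
      next
        case False
        then have pb: "p < length b" using p by simp
        then have "(b @ [?y]) ! p = b ! p" by (simp add: nth_append)
        also have "\<dots> < r ! p" using dm pb unfolding domr_def by simp
        also have "\<dots> \<le> r[?k := x] ! p" using ge pb dm unfolding domr_def by simp
        finally show ?thesis .
      qed
    qed
    then show ?thesis using False by (simp add: row_insert_closed)
  qed
qed

lemma domr_app: "domr r b \<Longrightarrow> domr (r @ [x]) b"
  unfolding domr_def by (auto simp: nth_append)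

fun ins_row :: "nat list list \<Rightarrow> nat \<Rightarrow> nat" where
  "ins_row [] x = 0"
| "ins_row (r # rs) x = (case row_insert r x of (_, None) \<Rightarrow> 0 | (_, Some y) \<Rightarrow> Suc (ins_row rs y))"

lemma hd'_tab_insert: "hd' (tab_insert rs y) = fst (row_insert (hd' rs) y)"
  by (cases rs) (auto split: prod.splits option.splits)

lemma tab_insert_Cons_closed:
  "tab_insert (r # rs) x = (if cnt r x < length r then r[cnt r x := x] # tab_insert rs (r ! cnt r x)
      else (r @ [x]) # rs)"
  by (simp add: row_insert_closed)

lemma ins_row_Cons_closed:
  "ins_row (r # rs) x = (if cnt r x < length r then Suc (ins_row rs (r ! cnt r x)) else 0)"
  by (simp add: row_insert_closed)

declare tab_insert.simps(2)[simp del] ins_row.simps(2)[simp del]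

lemma desc_Nil[simp]: "desc []" and desc_single[simp]: "desc [a]" by (simp_all add: desc_def)

lemma ssyt_tab_insert: "ssyt T \<Longrightarrow> ssyt (tab_insert T x)"
proof (induction T arbitrary: x)
  case Nil
  then show ?case by (simp add: ssyt_Cons desc_def domr_def)
next
  case (Cons r rs)
  then have dr: "desc r" and srs: "ssyt rs" and dm: "domr r (hd' rs)" by (auto simp: ssyt_Cons)
  have dh: "desc (hd' rs)" using srs by (cases rs) (auto simp: ssyt_Cons)
  show ?case
  proof (cases "cnt r x < length r")
    case True
    have "desc (r[cnt r x := x])" using desc_row_insert[OF dr, of x] True by (simp add: row_insert_closed)
    moreover have "ssyt (tab_insert rs (r ! cnt r x))" using Cons.IH srs by blast
    moreover have "domr (r[cnt r x := x]) (hd' (tab_insert rs (r ! cnt r x)))"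
      using domr_bump[OF dr dh dm True] by (simp add: hd'_tab_insert)
    ultimately show ?thesis using True by (simp add: tab_insert_Cons_closed ssyt_Cons)
  next
    case False
    have "desc (r @ [x])" using desc_row_insert[OF dr, of x] False by (simp add: row_insert_closed)
    then show ?thesis using False srs domr_app[OF dm] by (simp add: tab_insert_Cons_closed ssyt_Cons)
  qed
qed

lemma tab_insert_length:
  "length (tab_insert T x) = (if ins_row T x < length T then length T else Suc (length T))"
  by (induction T arbitrary: x) (auto simp: tab_insert_Cons_closed ins_row_Cons_closed)

lemma tab_insert_nth_length:
  "i < length T \<Longrightarrow> length (tab_insert T x ! i) = (if i = ins_row T x then Suc (length (T ! i)) else length (T ! i))"
proof (induction T arbitrary: x i)
  case Nil then show ?case by simp
next
  case (Cons r rs)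
  show ?case
  proof (cases i)
    case 0 then show ?thesis by (auto simp: tab_insert_Cons_closed ins_row_Cons_closed)
  next
    case (Suc i')
    then show ?thesis using Cons by (auto simp: tab_insert_Cons_closed ins_row_Cons_closed)
  qed
qed

lemma ins_row_le: "ins_row T x \<le> length T"
  by (induction T arbitrary: x) (auto simp: ins_row_Cons_closed)

lemma set_tab_insert: "set (concat (tab_insert T x)) \<subseteq> insert x (set (concat T))"
proof (induction T arbitrary: x)
  case Nil then show ?case by simp
next
  case (Cons r rs)
  show ?case
  proof (cases "cnt r x < length r")
    case True
    have "r ! cnt r x \<in> set r" using True by simp
    moreover have "set (r[cnt r x := x]) \<subseteq> insert x (set r)" by (rule set_update_subset_insert)
    ultimately show ?thesis using True Cons[of "r ! cnt r x"] by (auto simp: tab_insert_Cons_closed)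
  next
    case False then show ?thesis by (auto simp: tab_insert_Cons_closed)
  qed
qed

lemma ins_row_lt_length:
  "(\<forall>e \<in> set (concat T). 1 \<le> e) \<Longrightarrow> 1 \<le> x \<Longrightarrow> x \<le> length T \<Longrightarrow> ins_row T x < length T"
proof (induction T arbitrary: x)
  case Nil then show ?case by simp
next
  case (Cons r rs)
  show ?case
  proof (cases "cnt r x < length r")
    case True
    let ?y = "r ! cnt r x"
    have y1: "1 \<le> ?y" using Cons.prems True by auto
    have yx: "?y < x" using cnt_at True by blast
    have "ins_row rs ?y < length rs"
      using Cons.IH[of ?y] Cons.prems y1 yx by auto
    then show ?thesis using True by (simp add: ins_row_Cons_closed)
  next
    case False then show ?thesis by (simp add: ins_row_Cons_closed)
  qed
qed


definition rowsdesc :: "nat list list \<Rightarrow> bool" where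
  "rowsdesc T \<longleftrightarrow> (\<forall>i < length T. desc (T ! i))"

lemma rowsdesc_Cons[simp]: "rowsdesc (r # rs) \<longleftrightarrow> desc r \<and> rowsdesc rs"
  by (auto simp: rowsdesc_def less_Suc_eq_0_disj)

lemma rowsdesc_Nil[simp]: "rowsdesc []" by (simp add: rowsdesc_def)

lemma ssyt_rowsdesc: "ssyt T \<Longrightarrow> rowsdesc T"
  by (simp add: ssyt_def rowsdesc_def)

lemma bumping:
  "rowsdesc T \<Longrightarrow> (x < y \<longrightarrow> ins_row T x < ins_row (tab_insert T x) y)
     \<and> (y \<le> x \<longrightarrow> ins_row (tab_insert T x) y \<le> ins_row T x)"
proof (induction T arbitrary: x y)
  case Nil
  have "cnt [x] y = (if x < y then 0 else 1)" by (simp add: cnt_def)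
  then show ?case by (simp add: ins_row_Cons_closed)
next
  case (Cons r rs)
  have dr: "desc r" and drs: "rowsdesc rs" using Cons.prems by auto
  let ?k = "cnt r x"
  show ?case
  proof (cases "?k < length r")
    case False
    then have k: "?k = length r" using cnt_le[of r x] by simp
    have allge: "\<forall>p < length r. x \<le> r ! p" using cnt_before k by metis
    have T1: "tab_insert (r # rs) x = (r @ [x]) # rs" using False by (simp add: tab_insert_Cons_closed)
    have I1: "ins_row (r # rs) x = 0" using False by (simp add: ins_row_Cons_closed)
    show ?thesis
    proof (intro conjI impI)
      assume xy: "x < y"
      have "cnt (r @ [x]) y \<le> length r"
      proof (rule ccontr)
        assume "\<not> cnt (r @ [x]) y \<le> length r"
        then have "y \<le> (r @ [x]) ! length r" using cnt_before by (metis not_le)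
        then show False using xy by simp
      qed
      then have "cnt (r @ [x]) y < length (r @ [x])" by simp
      then show "ins_row (r # rs) x < ins_row (tab_insert (r # rs) x) y"
        unfolding T1 I1 by (simp add: ins_row_Cons_closed)
    next
      assume yx: "y \<le> x"
      show "ins_row (tab_insert (r # rs) x) y \<le> ins_row (r # rs) x"
      proof -
        have "cnt (r @ [x]) y = length (r @ [x])"
        proof -
          have "\<forall>z \<in> set (r @ [x]). y \<le> z" using allge yx
            by (auto simp: in_set_conv_nth) (meson le_trans)
          then show ?thesis unfolding cnt_def by simp
        qed
        then show ?thesis unfolding T1 I1 by (simp add: ins_row_Cons_closed)
      qed
    qed
  next
    case True
    let ?b = "r ! ?k"
    let ?r' = "r[?k := x]"
    have bx: "?b < x" using cnt_at True by blast
    have T1: "tab_insert (r # rs) x = ?r' # tab_insert rs ?b" using True by (simp add: tab_insert_Cons_closed)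
    have I1: "ins_row (r # rs) x = Suc (ins_row rs ?b)" using True by (simp add: ins_row_Cons_closed)
    have lr': "length ?r' = length r" by simp
    show ?thesis
    proof (intro conjI impI)
      assume xy: "x < y"
      let ?k2 = "cnt ?r' y"
      have k2: "?k2 \<le> ?k"
      proof (rule ccontr)
        assume "\<not> ?k2 \<le> ?k"
        then have "y \<le> ?r' ! ?k" using cnt_before by (metis not_le)
        then show False using xy True by simp
      qed
      then have k2l: "?k2 < length ?r'" using True by simp
      have b2: "?b < ?r' ! ?k2"
      proof (cases "?k2 = ?k")
        case True then show ?thesis using bx \<open>?k < length r\<close> by simp
      next
        case False
        then have "?k2 < ?k" using k2 by simp
        then show ?thesis using cnt_before[of ?k2 r x] bx by simp
      qed
      have "ins_row rs ?b < ins_row (tab_insert rs ?b) (?r' ! ?k2)"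
        using Cons.IH[OF drs] b2 by blast
      then show "ins_row (r # rs) x < ins_row (tab_insert (r # rs) x) y"
        unfolding T1 I1 using k2l by (simp add: ins_row_Cons_closed)
    next
      assume yx: "y \<le> x"
      let ?k2 = "cnt ?r' y"
      have k2: "?k < ?k2"
      proof (rule ccontr)
        assume "\<not> ?k < ?k2"
        then have le: "?k2 \<le> ?k" by simp
        then have "?r' ! ?k2 < y" using cnt_at[of ?r' y] True by simp
        moreover have "x \<le> ?r' ! ?k2"
        proof (cases "?k2 = ?k")
          case True then show ?thesis using \<open>?k < length r\<close> by simp
        next
          case False
          then show ?thesis using le cnt_before[of ?k2 r x] by simp
        qed
        ultimately show False using yx by simp
      qed
      show "ins_row (tab_insert (r # rs) x) y \<le> ins_row (r # rs) x"
      proof (cases "?k2 < length ?r'")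
        case False
        then show ?thesis unfolding T1 I1 by (simp add: ins_row_Cons_closed)
      next
        case k2l: True
        have "?r' ! ?k2 = r ! ?k2" using k2 by simp
        also have "\<dots> \<le> ?b" using desc_le[OF dr, of ?k ?k2] k2 k2l by simp
        finally have "ins_row (tab_insert rs ?b) (?r' ! ?k2) \<le> ins_row rs ?b"
          using Cons.IH[OF drs] by blast
        then show ?thesis unfolding T1 I1 using k2l by (simp add: ins_row_Cons_closed)
      qed
    qed
  qed
qed

lemma row_inj:
  assumes d: "desc r" "desc r'" and k: "cnt r x < length r" "cnt r' x' < length r'"
    and q: "r[cnt r x := x] = r'[cnt r' x' := x']" and y: "r ! cnt r x = r' ! cnt r' x'"
  shows "r = r' \<and> x = x'"
proof -
  let ?q = "r[cnt r x := x]" and ?y = "r ! cnt r x"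
  have char: "\<And>r x. desc r \<Longrightarrow> cnt r x < length r \<Longrightarrow>
      \<forall>p < length r. (r ! cnt r x < r[cnt r x := x] ! p \<longleftrightarrow> p \<le> cnt r x)"
  proof (intro allI impI)
    fix r :: "nat list" and x p
    assume d: "desc r" and k: "cnt r x < length r" and p: "p < length r"
    have bx: "r ! cnt r x < x" using cnt_at k by blast
    show "r ! cnt r x < r[cnt r x := x] ! p \<longleftrightarrow> p \<le> cnt r x"
    proof (cases "p = cnt r x")
      case True then show ?thesis using k bx by simp
    next
      case False
      then have e: "r[cnt r x := x] ! p = r ! p" by simp
      show ?thesis
      proof (cases "p < cnt r x")
        case True then show ?thesis using e cnt_before[of p r x] bx by simp
      next
        case False
        then show ?thesis using e desc_le[OF d, of "cnt r x" p] p \<open>p \<noteq> cnt r x\<close> by simp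
      qed
    qed
  qed
  note c1 = char[OF d(1) k(1)] and c2 = char[OF d(2) k(2)]
  have len: "length r = length r'" using q by (metis length_list_update)
  have "cnt r x = cnt r' x'"
  proof (rule ccontr)
    assume ne: "cnt r x \<noteq> cnt r' x'"
    show False
    proof (cases "cnt r x < cnt r' x'")
      case True
      then show ?thesis using c1[rule_format, of "cnt r' x'"] c2[rule_format, of "cnt r' x'"] q y k len by auto
    next
      case False
      then have "cnt r' x' < cnt r x" using ne by simp
      then show ?thesis using c1[rule_format, of "cnt r x"] c2[rule_format, of "cnt r x"] q y k len by auto
    qed
  qed
  then have xx: "x = x'" using q k by (metis nth_list_update_eq)
  have "r = ?q[cnt r x := ?y]" by simp
  also have "\<dots> = r'" using q y \<open>cnt r x = cnt r' x'\<close> by (metis list_update_id list_update_overwrite)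
  finally show ?thesis using xx by simp
qed

lemma tab_insert_inj:
  "rowsdesc T \<Longrightarrow> rowsdesc T' \<Longrightarrow> length T = length T' \<Longrightarrow> tab_insert T x = tab_insert T' x'
    \<Longrightarrow> ins_row T x = ins_row T' x' \<Longrightarrow> T = T' \<and> x = x'"
proof (induction T arbitrary: T' x x')
  case Nil
  then show ?case by (simp add: tab_insert.simps(1))
next
  case (Cons r rs)
  obtain r' rs' where T': "T' = r' # rs'" using Cons.prems(3) by (cases T') auto
  have dr: "desc r" "desc r'" and drs: "rowsdesc rs" "rowsdesc rs'" using Cons.prems T' by auto
  have lrs: "length rs = length rs'" using Cons.prems(3) T' by simp
  show ?case
  proof (cases "cnt r x < length r")
    case True
    have c2: "cnt r' x' < length r'"
      using Cons.prems(5) True T' by (auto simp: ins_row_Cons_closed split: if_splits)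
    have e1: "r[cnt r x := x] = r'[cnt r' x' := x']" and e2: "tab_insert rs (r ! cnt r x) = tab_insert rs' (r' ! cnt r' x')"
      using Cons.prems(4) True c2 T' by (simp_all add: tab_insert_Cons_closed)
    have e3: "ins_row rs (r ! cnt r x) = ins_row rs' (r' ! cnt r' x')"
      using Cons.prems(5) True c2 T' by (simp add: ins_row_Cons_closed)
    have "rs = rs' \<and> r ! cnt r x = r' ! cnt r' x'" using Cons.IH[OF drs(1) drs(2) lrs e2 e3] .
    moreover have "r = r' \<and> x = x'" using row_inj[OF dr True c2 e1] calculation by blast
    ultimately show ?thesis using T' by simp
  next
    case False
    have c2: "\<not> cnt r' x' < length r'"
      using Cons.prems(5) False T' by (auto simp: ins_row_Cons_closed split: if_splits)
    then show ?thesis using Cons.prems(4) False T' by (simp add: tab_insert_Cons_closed)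
  qed
qed


lemma cnt_eqI: "k < length r \<Longrightarrow> (\<forall>p<k. x \<le> r ! p) \<Longrightarrow> r ! k < x \<Longrightarrow> cnt r x = k"
  unfolding cnt_def
  by (subst takeWhile_eq_take_P_nth[where n = k]) auto

lemma exist_uninsert:
  "ssyt U \<Longrightarrow> i < length U \<Longrightarrow> U ! i \<noteq> [] \<Longrightarrow> (Suc i < length U \<longrightarrow> length (U ! Suc i) < length (U ! i))
   \<Longrightarrow> \<exists>V x. ssyt V \<and> tab_insert V x = U \<and> length V = length U \<and> ins_row V x = i
        \<and> set (concat V) \<subseteq> set (concat U) \<and> x \<in> set (concat U)"
proof (induction U arbitrary: i)
  case Nil then show ?case by simp
next
  case (Cons r Us)
  have dr: "desc r" and sUs: "ssyt Us" and dm: "domr r (hd' Us)" using Cons.prems(1) by (auto simp: ssyt_Cons)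
  show ?case
  proof (cases i)
    case 0
    have rne: "r \<noteq> []" using Cons.prems(3) 0 by simp
    let ?V = "butlast r # Us" and ?x = "last r"
    have lastr: "last r = r ! (length r - 1)" using rne by (simp add: last_conv_nth)
    have allge: "\<forall>p < length (butlast r). last r \<le> butlast r ! p"
      using desc_le[OF dr] lastr by (auto simp: nth_butlast)
    have c: "cnt (butlast r) (last r) = length (butlast r)"
    proof -
      have "\<forall>z \<in> set (butlast r). last r \<le> z" using allge by (auto simp: in_set_conv_nth)
      then have "takeWhile (\<lambda>z. last r \<le> z) (butlast r) = butlast r" using takeWhile_eq_all_conv by blast
      then show ?thesis unfolding cnt_def by (metis length_butlast)
    qed
    have ti: "tab_insert ?V ?x = r # Us" using c rne by (simp add: tab_insert_Cons_closed)
    have ir: "ins_row ?V ?x = 0" using c by (simp add: ins_row_Cons_closed)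
    have db: "desc (butlast r)" using dr unfolding desc_def by (auto simp: nth_butlast)
    have lh: "length (hd' Us) < length r"
      using Cons.prems(4) 0 rne by (cases Us) auto
    have "domr (butlast r) (hd' Us)"
      using dm lh unfolding domr_def by (auto simp: nth_butlast)
    then have sV: "ssyt ?V" using db sUs by (simp add: ssyt_Cons)
    have "set (concat ?V) \<subseteq> set (concat (r # Us))" by (auto dest: in_set_butlastD)
    moreover have "?x \<in> set (concat (r # Us))" using rne by simp
    ultimately show ?thesis using sV ti ir 0 by (metis length_Cons)
  next
    case (Suc i')
    have p1: "i' < length Us" using Cons.prems(2) Suc by simp
    have p2: "Us ! i' \<noteq> []" using Cons.prems(3) Suc by simp
    have p3: "Suc i' < length Us \<longrightarrow> length (Us ! Suc i') < length (Us ! i')" using Cons.prems(4) Suc by simp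
    obtain Vs y where sVs: "ssyt Vs" and tiV: "tab_insert Vs y = Us" and lV: "length Vs = length Us"
      and iV: "ins_row Vs y = i'" and setV: "set (concat Vs) \<subseteq> set (concat Us)" and yU: "y \<in> set (concat Us)"
      using Cons.IH[OF sUs p1 p2 p3] by blast
    let ?b = "hd' Vs"
    have VsNe: "Vs \<noteq> []" using lV p1 by auto
    have db: "desc ?b" using sVs VsNe by (cases Vs) (auto simp: ssyt_Cons)
    have hU: "hd' Us = fst (row_insert ?b y)" using tiV hd'_tab_insert by metis
    let ?j = "cnt ?b y"
    have jU: "?j < length (hd' Us) \<and> hd' Us ! ?j = y"
      using hU cnt_le[of ?b y] by (auto simp: row_insert_closed nth_append)
    have lbU: "length ?b \<le> length (hd' Us)" using hU by (auto simp: row_insert_closed)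
    have hUp: "\<And>p. p < length ?b \<Longrightarrow> p \<noteq> ?j \<Longrightarrow> hd' Us ! p = ?b ! p"
      using hU by (auto simp: row_insert_closed nth_append)
    have jr: "?j < length r" and yrj: "y < r ! ?j" using dm jU unfolding domr_def by auto
    define tw where "tw = length (takeWhile (\<lambda>z. y < z) r)"
    have twj: "Suc ?j \<le> tw" unfolding tw_def
      using desc_le[OF dr] yrj jr by (intro length_takeWhile_less_P_nth) (auto intro: less_le_trans)
    have twl: "tw \<le> length r" unfolding tw_def by (rule length_takeWhile_le)
    define k where "k = tw - 1"
    have kj: "?j \<le> k" and kl: "k < length r" using twj twl unfolding k_def by auto
    have ybefore: "\<And>p. p < tw \<Longrightarrow> y < r ! p" unfolding tw_def
      by (metis nth_mem set_takeWhileD takeWhile_nth)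
    have yk: "y < r ! k" using ybefore twj unfolding k_def by simp
    have yafter: "\<And>p. k < p \<Longrightarrow> p < length r \<Longrightarrow> r ! p \<le> y"
    proof -
      fix p assume kp: "k < p" and pl: "p < length r"
      then have tp: "tw \<le> p" "tw < length r" unfolding k_def using twj by auto
      have "\<not> y < r ! tw" using nth_length_takeWhile[of "\<lambda>z. y < z" r] tp unfolding tw_def by simp
      then show "r ! p \<le> y" using desc_le[OF dr tp(1) pl] by simp
    qed
    define r' where "r' = r[k := y]"
    define x where "x = r ! k"
    have cr': "cnt r' x = k"
    proof (rule cnt_eqI)
      show "k < length r'" using kl by (simp add: r'_def)
      show "\<forall>p<k. x \<le> r' ! p" using desc_le[OF dr] kl by (auto simp: r'_def x_def)
      show "r' ! k < x" using kl yk by (simp add: r'_def x_def)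
    qed
    have r'k: "r' ! k = y" using kl by (simp add: r'_def)
    have r'x: "r'[k := x] = r" by (simp add: r'_def x_def)
    have ti: "tab_insert (r' # Vs) x = r # Us"
      using cr' kl r'k r'x tiV by (simp add: tab_insert_Cons_closed r'_def)
    have ir: "ins_row (r' # Vs) x = Suc i'"
      using cr' kl r'k iV by (simp add: ins_row_Cons_closed r'_def)
    have dr': "desc r'" unfolding desc_def
    proof (intro allI impI)
      fix q assume q: "Suc q < length r'"
      show "r' ! Suc q \<le> r' ! q"
      proof (cases "q = k")
        case True then show ?thesis using yafter[of "Suc q"] q by (simp add: r'_def)
      next
        case False
        show ?thesis
        proof (cases "Suc q = k")
          case True then show ?thesis using yk desc_le[OF dr, of q k] kl by (simp add: r'_def)
        next
          case False
          then show ?thesis using \<open>q \<noteq> k\<close> q dr unfolding desc_def by (simp add: r'_def)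
        qed
      qed
    qed
    have dom': "domr r' ?b" unfolding domr_def
    proof (intro conjI allI impI)
      show "length ?b \<le> length r'" using lbU dm unfolding domr_def r'_def by simp
    next
      fix p assume p: "p < length ?b"
      show "?b ! p < r' ! p"
      proof (cases "p = k")
        case True
        have jb: "?j < length ?b" using kj True p by simp
        have "?b ! k \<le> ?b ! ?j" using desc_le[OF db kj] True p by simp
        also have "\<dots> < y" using cnt_at[OF jb] .
        finally show ?thesis using True kl by (simp add: r'_def)
      next
        case False
        then have e: "r' ! p = r ! p" by (simp add: r'_def)
        show ?thesis
        proof (cases "p = ?j")
          case True
          then have "?b ! p < y" using cnt_at p by simp
          then show ?thesis using e yrj True by simp
        next
          case False
          then have "?b ! p = hd' Us ! p" using hUp p by simp
          also have "\<dots> < r ! p" using dm p lbU unfolding domr_def by simp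
          finally show ?thesis using e by simp
        qed
      qed
    qed
    have sV: "ssyt (r' # Vs)" using dr' sVs dom' by (simp add: ssyt_Cons)
    have "set r' \<subseteq> insert y (set r)" unfolding r'_def by (rule set_update_subset_insert)
    then have "set (concat (r' # Vs)) \<subseteq> set (concat (r # Us))" using setV yU by auto
    moreover have "x \<in> set (concat (r # Us))" using kl by (simp add: x_def)
    ultimately show ?thesis using sV ti ir Suc lV by (metis length_Cons)
  qed
qed


definition good :: "nat \<Rightarrow> nat list list \<Rightarrow> bool" where
  "good n T \<longleftrightarrow> ssyt T \<and> length T = n \<and> set (concat T) \<subseteq> {1..n}"

definition Dset :: "nat list list \<Rightarrow> nat list list \<Rightarrow> nat set" where
  "Dset T U = {i. i < length T \<and> length (U ! i) \<noteq> length (T ! i)}"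

lemma insert_all_Cons: "insert_all T (x # xs) = insert_all (tab_insert T x) xs"
  by (simp add: insert_all_def)

lemma insert_all_snoc: "insert_all T (xs @ [x]) = tab_insert (insert_all T xs) x"
  by (simp add: insert_all_def)

lemma insert_all_Nil[simp]: "insert_all T [] = T"
  by (simp add: insert_all_def)

lemma good_tab_insert:
  assumes g: "good n T" and x: "x \<in> {1..n}"
  shows "good n (tab_insert T x)" "ins_row T x < n"
proof -
  have "ins_row T x < length T"
    using g x by (intro ins_row_lt_length) (auto simp: good_def)
  then show "ins_row T x < n" using g by (simp add: good_def)
  have "set (concat (tab_insert T x)) \<subseteq> {1..n}"
    using g x set_tab_insert[of T x] unfolding good_def by blast
  then show "good n (tab_insert T x)"
    using g ssyt_tab_insert[of T x] tab_insert_length[of T x] \<open>ins_row T x < length T\<close>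
    unfolding good_def by auto
qed

lemma good_insert_all: "good n T \<Longrightarrow> set xs \<subseteq> {1..n} \<Longrightarrow> good n (insert_all T xs)"
  by (induction xs arbitrary: T) (auto simp: insert_all_Cons good_tab_insert)

lemma INV:
  assumes g: "good n T" and s: "sorted_wrt (<) xs" and xs: "set xs \<subseteq> {1..n}"
  shows "(\<forall>i<n. length (T ! i) \<le> length (insert_all T xs ! i) \<and> length (insert_all T xs ! i) \<le> Suc (length (T ! i)))
     \<and> card (Dset T (insert_all T xs)) = length xs
     \<and> (xs \<noteq> [] \<longrightarrow> ins_row (insert_all T (butlast xs)) (last xs) \<in> Dset T (insert_all T xs)
          \<and> (\<forall>i \<in> Dset T (insert_all T xs). i \<le> ins_row (insert_all T (butlast xs)) (last xs)))"
  using s xs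
proof (induction xs rule: rev_induct)
  case Nil
  then show ?case by (simp add: Dset_def)
next
  case (snoc x xs)
  have sx: "sorted_wrt (<) xs" and xsn: "set xs \<subseteq> {1..n}" and xn: "x \<in> {1..n}"
    and lt: "\<forall>y \<in> set xs. y < x"
    using snoc.prems by (auto simp: sorted_wrt_append)
  note IH = snoc.IH[OF sx xsn]
  let ?W = "insert_all T xs"
  let ?U = "insert_all T (xs @ [x])"
  let ?r = "ins_row ?W x"
  have gW: "good n ?W" using good_insert_all[OF g xsn] .
  have U: "?U = tab_insert ?W x" by (simp add: insert_all_snoc)
  have rn: "?r < n" using good_tab_insert(2)[OF gW xn] .
  have lT: "length T = n" and lW: "length ?W = n" using g gW by (auto simp: good_def)
  have lenU: "\<And>i. i < n \<Longrightarrow> length (?U ! i) = (if i = ?r then Suc (length (?W ! i)) else length (?W ! i))"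
    using U tab_insert_nth_length lW by simp
  have rnot: "?r \<notin> Dset T ?W"
  proof (cases "xs = []")
    case True then show ?thesis by (simp add: Dset_def)
  next
    case False
    then obtain ys x0 where sn: "xs = ys @ [x0]" by (metis rev_exhaust)
    let ?Z = "insert_all T ys"
    have W: "?W = tab_insert ?Z x0" using sn by (simp add: insert_all_snoc)
    have "set ys \<subseteq> {1..n}" using xsn sn by auto
    then have gW0: "good n ?Z" using good_insert_all[OF g] by blast
    have x0x: "x0 < x" using lt sn by simp
    have "ins_row ?Z x0 < ins_row (tab_insert ?Z x0) x"
      using bumping[of ?Z x0 x] gW0 x0x by (simp add: good_def ssyt_rowsdesc)
    moreover have "\<forall>i \<in> Dset T ?W. i \<le> ins_row ?Z x0" using IH sn by simp
    ultimately show ?thesis using W by fastforce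
  qed
  have Dnew: "Dset T ?U = insert ?r (Dset T ?W)"
  proof -
    have "\<And>i. i \<in> Dset T ?U \<longleftrightarrow> i = ?r \<or> i \<in> Dset T ?W"
    proof -
      fix i
      show "i \<in> Dset T ?U \<longleftrightarrow> i = ?r \<or> i \<in> Dset T ?W"
      proof (cases "i = ?r")
        case True
        then have "length (?W ! i) = length (T ! i)" using rnot rn lT by (simp add: Dset_def)
        then show ?thesis using True rn lT lenU[of i] by (simp add: Dset_def)
      next
        case False
        then show ?thesis using lenU[of i] lT by (auto simp: Dset_def)
      qed
    qed
    then show ?thesis by blast
  qed
  have fin: "finite (Dset T ?W)" by (simp add: Dset_def)
  show ?case
  proof (intro conjI impI)
    show "\<forall>i<n. length (T ! i) \<le> length (?U ! i) \<and> length (?U ! i) \<le> Suc (length (T ! i))"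
    proof (intro allI impI)
      fix i assume i: "i < n"
      show "length (T ! i) \<le> length (?U ! i) \<and> length (?U ! i) \<le> Suc (length (T ! i))"
      proof (cases "i = ?r")
        case True
        then have "length (?W ! i) = length (T ! i)" using rnot i lT by (simp add: Dset_def)
        then show ?thesis using True lenU[OF i] by simp
      next
        case False
        then show ?thesis using IH lenU[OF i] i by simp
      qed
    qed
    show "card (Dset T ?U) = length (xs @ [x])" using Dnew fin rnot IH by simp
    show "ins_row (insert_all T (butlast (xs @ [x]))) (last (xs @ [x])) \<in> Dset T ?U" using Dnew by simp
    show "\<forall>i\<in>Dset T ?U. i \<le> ins_row (insert_all T (butlast (xs @ [x]))) (last (xs @ [x]))"
    proof
      fix i assume "i \<in> Dset T ?U"
      then have "i = ?r \<or> i \<in> Dset T ?W" using Dnew by blast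
      then show "i \<le> ins_row (insert_all T (butlast (xs @ [x]))) (last (xs @ [x]))"
      proof
        assume iW: "i \<in> Dset T ?W"
        show ?thesis
        proof (cases "xs = []")
          case True then show ?thesis using iW by (simp add: Dset_def)
        next
          case False
          then obtain ys x0 where sn: "xs = ys @ [x0]" by (metis rev_exhaust)
          let ?Z = "insert_all T ys"
          have W: "?W = tab_insert ?Z x0" using sn by (simp add: insert_all_snoc)
          have "set ys \<subseteq> {1..n}" using xsn sn by auto
          then have gW0: "good n ?Z" using good_insert_all[OF g] by blast
          have x0x: "x0 < x" using lt sn by simp
          have "ins_row ?Z x0 < ins_row (tab_insert ?Z x0) x"
            using bumping[of ?Z x0 x] gW0 x0x by (simp add: good_def ssyt_rowsdesc)
          moreover have "i \<le> ins_row ?Z x0" using IH sn iW by simp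
          ultimately show ?thesis using W by simp
        qed
      qed simp
    qed
  qed
qed

lemma map_length_eq:
  assumes "map length T = map length (T' :: nat list list)"
  shows "length T = length T'" "\<And>i. i < length T \<Longrightarrow> length (T ! i) = length (T' ! i)"
proof -
  show l: "length T = length T'" using assms by (metis length_map)
  fix i assume "i < length T"
  then show "length (T ! i) = length (T' ! i)" using assms l by (metis nth_map)
qed

lemma Dset_cong: "map length T = map length T' \<Longrightarrow> Dset T U = Dset T' U"
  using map_length_eq[of T T'] unfolding Dset_def by auto

lemma uniq:
  assumes "good n T" "good n T'" "map length T = map length T'"
    "sorted_wrt (<) xs" "sorted_wrt (<) xs'" "set xs \<subseteq> {1..n}" "set xs' \<subseteq> {1..n}"
    "insert_all T xs = insert_all T' xs'"
  shows "T = T' \<and> xs = xs'"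
  using assms
proof (induction xs arbitrary: xs' rule: rev_induct)
  case Nil
  have DT: "Dset T' (insert_all T' xs') = Dset T (insert_all T [])"
    using Dset_cong[OF Nil.prems(3)] Nil.prems(8) by simp
  have "card (Dset T' (insert_all T' xs')) = length xs'" using INV[OF Nil.prems(2,5,7)] by blast
  moreover have "Dset T (insert_all T []) = {}" by (simp add: Dset_def)
  ultimately have "xs' = []" using DT by simp
  then show ?case using Nil.prems(8) by simp
next
  case (snoc x xs)
  define U where "U = insert_all T (xs @ [x])"
  have U': "U = insert_all T' xs'" using snoc.prems(8) U_def by simp
  have DT: "Dset T' U = Dset T U" using Dset_cong[OF snoc.prems(3)] by simp
  note I1 = INV[OF snoc.prems(1,4,6), folded U_def]
  note I2 = INV[OF snoc.prems(2,5,7), folded U']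
  have "length xs' = length (xs @ [x])"
  proof -
    have "length xs' = card (Dset T' U)" using I2 by simp
    also have "\<dots> = card (Dset T U)" using DT by simp
    also have "\<dots> = length (xs @ [x])" using I1 by simp
    finally show ?thesis .
  qed
  then obtain ys' x' where xs': "xs' = ys' @ [x']" by (cases xs' rule: rev_exhaust) auto
  let ?W = "insert_all T xs" and ?V = "insert_all T' ys'"
  have a: "ins_row ?W x \<in> Dset T U" "\<forall>i \<in> Dset T U. i \<le> ins_row ?W x" using I1 by simp_all
  have b0: "ins_row ?V x' \<in> Dset T' U \<and> (\<forall>i \<in> Dset T' U. i \<le> ins_row ?V x')"
    using I2 xs' by simp
  then have b: "ins_row ?V x' \<in> Dset T U" "\<forall>i \<in> Dset T U. i \<le> ins_row ?V x'" using DT by simp_all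
  have req: "ins_row ?W x = ins_row ?V x'" using a b by (meson le_antisym)
  have sxs: "sorted_wrt (<) xs" "set xs \<subseteq> {1..n}" using snoc.prems by (auto simp: sorted_wrt_append)
  have sys: "sorted_wrt (<) ys'" "set ys' \<subseteq> {1..n}" using snoc.prems(5,7) xs' by (auto simp: sorted_wrt_append)
  have gW: "good n ?W" using good_insert_all[OF snoc.prems(1) sxs(2)] .
  have gW': "good n ?V" using good_insert_all[OF snoc.prems(2) sys(2)] .
  have "tab_insert ?W x = tab_insert ?V x'" using snoc.prems(8) xs' by (simp add: insert_all_snoc)
  then have WV: "?W = ?V \<and> x = x'"
    using tab_insert_inj[of ?W ?V x x'] gW gW' req by (simp add: good_def ssyt_rowsdesc)
  have "T = T' \<and> xs = ys'"
    using snoc.IH[OF snoc.prems(1-3) sxs(1) sys(1) sxs(2) sys(2)] WV by blast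
  then show ?case using xs' WV by simp
qed


definition Oset :: "nat list list \<Rightarrow> nat set" where
  "Oset U = {i. i < length U \<and> odd (length (U ! i))}"

lemma finite_Oset[simp]: "finite (Oset U)" by (simp add: Oset_def)

lemma even_part_of_nth: "i < length mu \<Longrightarrow> even_part_of mu ! i = 2 * (mu ! i div 2)"
  by (simp add: even_part_of_def)

lemma exist_seq_aux:
  "k = card (Oset U) \<Longrightarrow> good n U \<Longrightarrow> \<exists>T xs. good n T \<and> map length T = even_part_of (map length U)
     \<and> sorted_wrt (<) xs \<and> set xs \<subseteq> {1..n} \<and> insert_all T xs = U"
proof (induction k arbitrary: U)
  case 0
  then have "Oset U = {}" by simp
  then have "\<forall>i < length U. even (length (U ! i))" by (auto simp: Oset_def)
  then have "even_part_of (map length U) = map length U"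
    by (intro nth_equalityI) (auto simp: even_part_of_def)
  then show ?case using 0 by (intro exI[of _ U] exI[of _ "[]"]) simp
next
  case (Suc k)
  have gU: "good n U" using Suc.prems by simp
  have sU: "ssyt U" and lU: "length U = n" and eU: "set (concat U) \<subseteq> {1..n}" using gU by (auto simp: good_def)
  have One: "Oset U \<noteq> {}" using Suc.prems(1) by auto
  define i where "i = Max (Oset U)"
  have iO: "i \<in> Oset U" unfolding i_def using One by simp
  have iMax: "\<And>j. j \<in> Oset U \<Longrightarrow> j \<le> i" unfolding i_def by simp
  have il: "i < length U" and iodd: "odd (length (U ! i))" using iO by (auto simp: Oset_def)
  have ine: "U ! i \<noteq> []" using iodd by auto
  have corner: "Suc i < length U \<longrightarrow> length (U ! Suc i) < length (U ! i)"
  proof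
    assume si: "Suc i < length U"
    have "length (U ! Suc i) \<le> length (U ! i)" using sU si by (simp add: ssyt_def domr_def)
    moreover have "Suc i \<notin> Oset U" using iMax by fastforce
    then have "even (length (U ! Suc i))" using si by (simp add: Oset_def)
    ultimately show "length (U ! Suc i) < length (U ! i)" using iodd by (metis le_neq_implies_less)
  qed
  obtain V x where sV: "ssyt V" and ti: "tab_insert V x = U" and lV: "length V = length U"
    and ir: "ins_row V x = i" and setV: "set (concat V) \<subseteq> set (concat U)" and xU: "x \<in> set (concat U)"
    using exist_uninsert[OF sU il ine corner] by blast
  have gV: "good n V" using sV lV lU setV eU by (auto simp: good_def)
  have xn: "x \<in> {1..n}" using xU eU by blast
  have lens: "\<And>j. j < length U \<Longrightarrow> length (U ! j) = (if j = i then Suc (length (V ! j)) else length (V ! j))"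
    using tab_insert_nth_length[of _ V x] ti ir lV by metis
  have OV: "Oset V = Oset U - {i}"
  proof -
    have "\<And>j. j \<in> Oset V \<longleftrightarrow> j \<in> Oset U \<and> j \<noteq> i"
    proof -
      fix j
      show "j \<in> Oset V \<longleftrightarrow> j \<in> Oset U \<and> j \<noteq> i"
      proof (cases "j = i")
        case True then show ?thesis using lens[of i] il iodd by (simp add: Oset_def lV)
      next
        case False then show ?thesis using lens[of j] by (auto simp: Oset_def lV)
      qed
    qed
    then show ?thesis by blast
  qed
  have cV: "k = card (Oset V)" using OV Suc.prems(1) iO by simp
  have epV: "even_part_of (map length V) = even_part_of (map length U)"
  proof (rule nth_equalityI)
    show "length (even_part_of (map length V)) = length (even_part_of (map length U))"
      using lV by (simp add: even_part_of_def)
  next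
    fix j assume j: "j < length (even_part_of (map length V))"
    then have jl: "j < length U" using lV by (simp add: even_part_of_def)
    show "even_part_of (map length V) ! j = even_part_of (map length U) ! j"
    proof (cases "j = i")
      case True
      have "2 * (length (V ! i) div 2) = 2 * (Suc (length (V ! i)) div 2)"
        using lens[OF il] iodd by simp
      then show ?thesis using True lens[OF jl] jl lV by (simp add: even_part_of_def)
    next
      case False then show ?thesis using lens[OF jl] jl lV by (simp add: even_part_of_def)
    qed
  qed
  obtain T ys where gT: "good n T" and mT: "map length T = even_part_of (map length V)"
    and sys: "sorted_wrt (<) ys" and ysn: "set ys \<subseteq> {1..n}" and iaV: "insert_all T ys = V"
    using Suc.IH[OF cV gV] by blast
  have lt: "\<forall>y \<in> set ys. y < x"
  proof (rule ccontr)
    assume "\<not> (\<forall>y \<in> set ys. y < x)"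
    then obtain y where yys: "y \<in> set ys" and xy: "x \<le> y" by auto
    then have "ys \<noteq> []" by auto
    then obtain zs y0 where ys: "ys = zs @ [y0]" by (metis rev_exhaust)
    have "y \<le> y0" using yys sys ys by (auto simp: sorted_wrt_append)
    then have xy0: "x \<le> y0" using xy by simp
    let ?Z = "insert_all T zs"
    have VZ: "V = tab_insert ?Z y0" using iaV ys by (simp add: insert_all_snoc)
    have zsn: "set zs \<subseteq> {1..n}" using ysn ys by auto
    have gZ: "good n ?Z" using good_insert_all[OF gT zsn] .
    have "ins_row (tab_insert ?Z y0) x \<le> ins_row ?Z y0"
      using bumping[of ?Z y0 x] gZ xy0 by (simp add: good_def ssyt_rowsdesc)
    then have ir0: "i \<le> ins_row ?Z y0" using VZ ir by simp
    have "ins_row ?Z y0 \<in> Dset T V" using INV[OF gT sys ysn] iaV ys by simp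
    then have r0: "ins_row ?Z y0 < length T" "length (V ! ins_row ?Z y0) \<noteq> length (T ! ins_row ?Z y0)"
      by (auto simp: Dset_def)
    let ?r = "ins_row ?Z y0"
    have lT: "length T = length V" using gT gV by (simp add: good_def)
    have "length (T ! ?r) = 2 * (length (V ! ?r) div 2)"
      using mT r0(1) lT by (metis even_part_of_nth length_map nth_map)
    then have "odd (length (V ! ?r))" using r0(2) by presburger
    then have "?r \<in> Oset V" using r0(1) lT by (simp add: Oset_def)
    then have "?r \<in> Oset U" "?r \<noteq> i" using OV by auto
    then show False using iMax ir0 by fastforce
  qed
  have "sorted_wrt (<) (ys @ [x])" using sys lt by (simp add: sorted_wrt_append)
  moreover have "set (ys @ [x]) \<subseteq> {1..n}" using ysn xn by simp
  moreover have "insert_all T (ys @ [x]) = U" using iaV ti by (simp add: insert_all_snoc)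
  ultimately show ?case using gT mT epV by metis
qed

lemma exist_seq:
  "good n U \<Longrightarrow> \<exists>T xs. good n T \<and> map length T = even_part_of (map length U)
     \<and> sorted_wrt (<) xs \<and> set xs \<subseteq> {1..n} \<and> insert_all T xs = U"
  using exist_seq_aux by blast


lemma sls_set: "sorted_wrt (<) xs \<Longrightarrow> sorted_list_of_set (set xs) = xs"
  by (simp add: strict_sorted_iff sorted_list_of_set.idem_if_sorted_distinct)

lemma sls_props: "finite A \<Longrightarrow> sorted_wrt (<) (sorted_list_of_set A) \<and> set (sorted_list_of_set A) = A"
  by (simp add: strict_sorted_list_of_set)

lemma len_helper: "(length b \<le> length (r::nat list) \<and> (\<forall>j<length (b::nat list). P j)) \<longleftrightarrow> (\<forall>j<length b. j < length r \<and> P j)"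
proof
  assume R: "\<forall>j<length b. j < length r \<and> P j"
  have "length b \<le> length r"
  proof (rule ccontr)
    assume "\<not> length b \<le> length r"
    then show False using R[rule_format, of "length r"] by simp
  qed
  then show "length b \<le> length r \<and> (\<forall>j<length b. P j)" using R by blast
qed auto

lemma SSYT_iff: "length lam = n \<Longrightarrow> T \<in> SSYT lam n \<longleftrightarrow> good n T \<and> map length T = lam"
proof -
  assume ln: "length lam = n"
  have A: "map length T = lam \<longleftrightarrow> length T = length lam \<and> (\<forall>i < length T. length (T ! i) = lam ! i)"
  proof
    assume "map length T = lam"
    then show "length T = length lam \<and> (\<forall>i < length T. length (T ! i) = lam ! i)" by auto
  next
    assume H: "length T = length lam \<and> (\<forall>i < length T. length (T ! i) = lam ! i)"
    show "map length T = lam" by (rule nth_equalityI) (use H in auto)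
  qed
  have B: "set (concat T) \<subseteq> {1..n} \<longleftrightarrow> (\<forall>i < length T. \<forall>j < length (T ! i). 1 \<le> T ! i ! j \<and> T ! i ! j \<le> n)"
  proof
    assume L: "set (concat T) \<subseteq> {1..n}"
    show "\<forall>i < length T. \<forall>j < length (T ! i). 1 \<le> T ! i ! j \<and> T ! i ! j \<le> n"
    proof (intro allI impI)
      fix i j assume i: "i < length T" and j: "j < length (T ! i)"
      have "T ! i \<in> set T" using i by simp
      moreover have "T ! i ! j \<in> set (T ! i)" using j by simp
      ultimately have "T ! i ! j \<in> set (concat T)" by auto
      then show "1 \<le> T ! i ! j \<and> T ! i ! j \<le> n" using L by auto
    qed
  next
    assume R: "\<forall>i < length T. \<forall>j < length (T ! i). 1 \<le> T ! i ! j \<and> T ! i ! j \<le> n"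
    show "set (concat T) \<subseteq> {1..n}"
    proof
      fix z assume "z \<in> set (concat T)"
      then obtain row where row: "row \<in> set T" "z \<in> set row" by auto
      then obtain i where i: "i < length T" "row = T ! i" by (auto simp: in_set_conv_nth)
      then obtain j where j: "j < length (T ! i)" "z = T ! i ! j" using row(2) by (auto simp: in_set_conv_nth)
      then show "z \<in> {1..n}" using R i by auto
    qed
  qed
  have C: "ssyt T \<longleftrightarrow> (\<forall>i < length T. \<forall>j. Suc j < length (T ! i) \<longrightarrow> T ! i ! Suc j \<le> T ! i ! j)
     \<and> (\<forall>i. Suc i < length T \<longrightarrow> (\<forall>j < length (T ! Suc i). j < length (T ! i) \<and> T ! Suc i ! j < T ! i ! j))"
    unfolding ssyt_def desc_def domr_def len_helper by blast
  show ?thesis unfolding SSYT_def good_def mem_Collect_eq A B C using ln by blast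
qed

lemma ext01_eq:
  assumes "t \<in> {1..n} \<rightarrow>\<^sub>E {0, 1}" "t' \<in> {1..n} \<rightarrow>\<^sub>E {0::nat, 1}" "ones n t = ones n t'"
  shows "t = t'"
proof
  fix i
  show "t i = t' i"
  proof (cases "i \<in> {1..n}")
    case True
    have a: "t i \<in> {0,1}" using PiE_mem[OF assms(1) True] by simp
    have b: "t' i \<in> {0,1}" using PiE_mem[OF assms(2) True] by simp
    have "i \<in> ones n t \<longleftrightarrow> i \<in> ones n t'" using assms(3) by simp
    then have c: "t i = 1 \<longleftrightarrow> t' i = 1" using True by (simp add: ones_def)
    show ?thesis
    proof (cases "t i = 1")
      case True then show ?thesis using c by simp
    next
      case False then show ?thesis using a b c by simp
    qed
  next
    case False
    have "t i = undefined" by (rule PiE_arb[OF assms(1) False])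
    moreover have "t' i = undefined" by (rule PiE_arb[OF assms(2) False])
    ultimately show ?thesis by simp
  qed
qed

lemma fmap_eq:
  assumes lmu: "length mu = n"
    and P: "lam = even_part_of mu" "T \<in> SSYT lam n" "t \<in> {1..n} \<rightarrow>\<^sub>E {0, 1}"
      "U = insert_all T (sorted_list_of_set (ones n t))"
  shows "f_map n (U, mu) = ((T, lam), t)"
  unfolding f_map_def fst_conv snd_conv
proof (rule the_equality)
  show "case ((T, lam), t) of ((T, lam), t) \<Rightarrow> lam = even_part_of mu \<and> T \<in> SSYT lam n \<and> t \<in> {1..n} \<rightarrow>\<^sub>E {0, 1}
      \<and> U = insert_all T (sorted_list_of_set (ones n t))" using P by simp
next
  fix r
  assume H: "case r of ((T, lam), t) \<Rightarrow> lam = even_part_of mu \<and> T \<in> SSYT lam n \<and> t \<in> {1..n} \<rightarrow>\<^sub>E {0, 1}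
      \<and> U = insert_all T (sorted_list_of_set (ones n t))"
  obtain T' lam' t' where r: "r = ((T', lam'), t')" by (metis prod.collapse)
  have H': "lam' = lam" "T' \<in> SSYT lam n" "t' \<in> {1..n} \<rightarrow>\<^sub>E {0, 1}"
    "U = insert_all T' (sorted_list_of_set (ones n t'))" using H r P(1) by auto
  have llam: "length lam = n" using P(1) lmu by (simp add: even_part_of_def)
  have g: "good n T" "map length T = lam" using SSYT_iff[OF llam] P(2) by auto
  have g': "good n T'" "map length T' = lam" using SSYT_iff[OF llam] H'(2) by auto
  have fo: "finite (ones n t)" "finite (ones n t')" "ones n t \<subseteq> {1..n}" "ones n t' \<subseteq> {1..n}"
    by (auto simp: ones_def)
  define xs where "xs = sorted_list_of_set (ones n t)"
  define xs' where "xs' = sorted_list_of_set (ones n t')"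
  have sx: "sorted_wrt (<) xs" "set xs = ones n t" using sls_props[OF fo(1)] xs_def by auto
  have sx': "sorted_wrt (<) xs'" "set xs' = ones n t'" using sls_props[OF fo(2)] xs'_def by auto
  have eq: "insert_all T xs = insert_all T' xs'" using P(4) H'(4) xs_def xs'_def by simp
  have ml: "map length T = map length T'" using g(2) g'(2) by simp
  have "T = T' \<and> xs = xs'"
    by (rule uniq[OF g(1) g'(1) ml sx(1) sx'(1) _ _ eq]) (use sx(2) sx'(2) fo(3,4) in auto)
  then have "T = T'" "ones n t = ones n t'" using sx(2) sx'(2) by auto
  then show "r = ((T, lam), t)" using r H'(1) ext01_eq[OF P(3) H'(3)] by simp
qed

lemma row0_keep:
  assumes "good n T" "sorted_wrt (<) xs" "set xs \<subseteq> {1..n}" "T \<noteq> []" "T ! 0 \<noteq> []"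
    "\<forall>x \<in> set xs. last (T ! 0) < x"
  shows "length (insert_all T xs ! 0) = length (T ! 0)"
  using assms
proof (induction xs arbitrary: T)
  case Nil then show ?case by simp
next
  case (Cons x xs)
  obtain r rs where T: "T = r # rs" using Cons.prems(4) by (cases T) auto
  have rne: "r \<noteq> []" using Cons.prems(5) T by simp
  have lx: "last r < x" using Cons.prems(6) T by simp
  have lastr: "last r = r ! (length r - 1)" using rne by (simp add: last_conv_nth)
  have ck: "cnt r x < length r"
  proof (rule ccontr)
    assume "\<not> cnt r x < length r"
    then have "length r - 1 < cnt r x" using rne cnt_le[of r x] by (cases r) auto
    then have "x \<le> r ! (length r - 1)" using cnt_before by blast
    then show False using lx lastr by simp
  qed
  let ?r' = "r[cnt r x := x]"
  have ti: "tab_insert T x = ?r' # tab_insert rs (r ! cnt r x)" using ck T by (simp add: tab_insert_Cons_closed)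
  have lastr': "last ?r' = x \<or> last ?r' = last r"
    using rne lastr by (cases "cnt r x = length r - 1") (auto simp: last_conv_nth nth_list_update)
  have xn: "x \<in> {1..n}" using Cons.prems(3) by simp
  have "length (insert_all (tab_insert T x) xs ! 0) = length (tab_insert T x ! 0)"
  proof (rule Cons.IH)
    show "good n (tab_insert T x)" using good_tab_insert(1)[OF Cons.prems(1) xn] .
    show "sorted_wrt (<) xs" "set xs \<subseteq> {1..n}" using Cons.prems(2,3) by auto
    show "tab_insert T x \<noteq> []" "tab_insert T x ! 0 \<noteq> []" using ti rne by auto
    show "\<forall>y \<in> set xs. last (tab_insert T x ! 0) < y"
      using ti lastr' Cons.prems(2,6) T by auto
  qed
  then show ?case using ti T by (simp add: insert_all_Cons)
qed

lemma row0_grow: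
  assumes g: "good n T" and n: "0 < n" and s: "sorted_wrt (<) xs" and xs: "set xs \<subseteq> {1..n}" and ne: "xs \<noteq> []"
    and le: "\<forall>z \<in> set (T ! 0). hd xs \<le> z"
  shows "Suc (length (T ! 0)) \<le> length (insert_all T xs ! 0)"
proof -
  obtain x ys where xs': "xs = x # ys" using ne by (cases xs) auto
  have lT: "length T = n" using g by (simp add: good_def)
  obtain r rs where T: "T = r # rs" using lT n by (cases T) auto
  have "\<forall>z \<in> set r. x \<le> z" using le xs' T by simp
  then have "takeWhile (\<lambda>z. x \<le> z) r = r" using takeWhile_eq_all_conv by blast
  then have "cnt r x = length r" unfolding cnt_def by (rule arg_cong[where f=length])
  then have ti: "tab_insert T x = (r @ [x]) # rs" using T by (simp add: tab_insert_Cons_closed)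
  have xn: "x \<in> {1..n}" using xs xs' by simp
  have gT1: "good n (tab_insert T x)" using good_tab_insert(1)[OF g xn] .
  have "length (tab_insert T x ! 0) \<le> length (insert_all (tab_insert T x) ys ! 0)"
    using INV[OF gT1, of ys] s xs xs' n by simp
  then show ?thesis using ti T xs' by (simp add: insert_all_Cons)
qed

lemma partition_le0: "is_partition n mu \<Longrightarrow> i < n \<Longrightarrow> mu ! i \<le> mu ! 0"
proof (induction i)
  case 0 then show ?case by simp
next
  case (Suc i)
  then have "mu ! Suc i \<le> mu ! i" by (simp add: is_partition_def)
  then show ?case using Suc by simp
qed


lemma part_sub:
  assumes n: "n > 0" and UL: "(U, mu) \<in> LHS_dom n m"
  shows "f_map n (U, mu) \<in> {((T, lam), t). (T, lam) \<in> even_tabs n m \<and> t \<in> {1..n} \<rightarrow>\<^sub>E {0, 1}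
              \<and> ones n t \<subseteq> S_set n m T}"
proof -
  have pm: "is_partition n mu" and bm: "bounded_by mu (2 * m)" and UM: "U \<in> SSYT mu n"
    using UL by (auto simp: LHS_dom_def)
  have lmu: "length mu = n" using pm by (simp add: is_partition_def)
  have gU: "good n U" and mU: "map length U = mu" using SSYT_iff[OF lmu] UM by auto
  obtain T xs where gT: "good n T" and mT: "map length T = even_part_of mu" and sx: "sorted_wrt (<) xs"
    and xsn: "set xs \<subseteq> {1..n}" and ia: "insert_all T xs = U"
    using exist_seq[OF gU] mU by blast
  define lam where "lam = even_part_of mu"
  have llam: "length lam = n" using lmu by (simp add: lam_def even_part_of_def)
  define t where "t = (\<lambda>i. if i \<in> {1..n} then (if i \<in> set xs then 1 else 0) else (undefined :: nat))"
  have tP: "t \<in> {1..n} \<rightarrow>\<^sub>E {0, 1}" unfolding t_def PiE_def extensional_def by auto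
  have ot: "ones n t = set xs" unfolding ones_def t_def using xsn by auto
  have sl: "sorted_list_of_set (ones n t) = xs" using ot sls_set[OF sx] by simp
  have TS: "T \<in> SSYT lam n" using SSYT_iff[OF llam] gT mT lam_def by simp
  have fm: "f_map n (U, mu) = ((T, lam), t)"
    by (rule fmap_eq[OF lmu lam_def TS tP]) (use sl ia in simp)
  have lamnth: "\<And>i. i < n \<Longrightarrow> lam ! i = 2 * (mu ! i div 2)" using lmu by (simp add: lam_def even_part_of_def)
  have plam: "is_partition n lam" unfolding is_partition_def
  proof (intro conjI allI impI)
    show "length lam = n" by (rule llam)
    fix i assume i: "Suc i < n"
    have "mu ! Suc i \<le> mu ! i" using pm i by (simp add: is_partition_def)
    then have "mu ! Suc i div 2 \<le> mu ! i div 2" by (rule div_le_mono)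
    then show "lam ! Suc i \<le> lam ! i" using lamnth[of i] lamnth[of "Suc i"] i by simp
  qed
  have blam: "bounded_by lam (2 * m)" unfolding bounded_by_def
  proof (intro allI impI)
    fix i assume "i < length lam"
    then have i: "i < n" using llam by simp
    have "lam ! i \<le> mu ! i" using lamnth[OF i] by simp
    also have "\<dots> \<le> 2 * m" using bm i lmu by (simp add: bounded_by_def)
    finally show "lam ! i \<le> 2 * m" .
  qed
  have elam: "even_partition lam" unfolding even_partition_def using lamnth llam by simp
  have et: "(T, lam) \<in> even_tabs n m" using plam blam elam TS by (simp add: even_tabs_def)
  have lT: "length T = n" and lU: "length U = n" using gT gU by (auto simp: good_def)
  have "mu ! 0 \<le> 2 * m" using bm n lmu unfolding bounded_by_def by simp
  moreover have "length (U ! 0) = mu ! 0" unfolding mU[symmetric] using lU n by simp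
  ultimately have U0: "length (U ! 0) \<le> 2 * m" by simp
  have T0: "length (T ! 0) = lam ! 0" using mT lam_def lT n by (metis length_map nth_map)
  have T0le: "length (T ! 0) \<le> 2 * m" using T0 blam n llam by (simp add: bounded_by_def)
  have sub: "ones n t \<subseteq> S_set n m T"
  proof (cases "m = 0")
    case True
    have "xs = []"
    proof (rule ccontr)
      assume ne: "xs \<noteq> []"
      have "T ! 0 = []" using T0le True by simp
      then have "Suc (length (T ! 0)) \<le> length (insert_all T xs ! 0)"
        using row0_grow[OF gT n sx xsn ne] by simp
      then show False using U0 ia True \<open>T ! 0 = []\<close> by simp
    qed
    then show ?thesis using ot by simp
  next
    case m0: False
    show ?thesis
    proof (cases "length (T ! 0) < 2 * m")
      case True
      then show ?thesis using m0 ot xsn by (simp add: S_set_def)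
    next
      case False
      then have T02: "length (T ! 0) = 2 * m" using T0le by simp
      have "\<forall>x \<in> set xs. T ! 0 ! (2 * m - 1) < x"
      proof (rule ccontr)
        assume "\<not> (\<forall>x \<in> set xs. T ! 0 ! (2 * m - 1) < x)"
        then obtain x where x: "x \<in> set xs" "x \<le> T ! 0 ! (2 * m - 1)" by auto
        then have ne: "xs \<noteq> []" by auto
        have hx: "hd xs \<le> x" using sx x(1) ne by (cases xs) auto
        have d0: "desc (T ! 0)" using gT lT n by (simp add: good_def ssyt_def)
        have "\<forall>z \<in> set (T ! 0). hd xs \<le> z"
        proof
          fix z assume "z \<in> set (T ! 0)"
          then obtain j where j: "j < length (T ! 0)" "z = T ! 0 ! j" by (auto simp: in_set_conv_nth)
          then have "T ! 0 ! (2 * m - 1) \<le> z" using desc_le[OF d0, of j "2 * m - 1"] T02 by simp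
          then show "hd xs \<le> z" using hx x(2) by simp
        qed
        then have "Suc (length (T ! 0)) \<le> length (insert_all T xs ! 0)"
          using row0_grow[OF gT n sx xsn ne] by simp
        then show False using U0 ia T02 by simp
      qed
      note allx = this
      show ?thesis
      proof
        fix x assume "x \<in> ones n t"
        then have x: "x \<in> set xs" using ot by simp
        then have "T ! 0 ! (2 * m - 1) < x" using allx by blast
        moreover have "x \<le> n" using x xsn by auto
        ultimately show "x \<in> S_set n m T" using m0 False by (simp add: S_set_def)
      qed
    qed
  qed
  show ?thesis using fm et tP sub by simp
qed


lemma part_sup:
  assumes n: "n > 0" and R: "(T, lam) \<in> even_tabs n m" "t \<in> {1..n} \<rightarrow>\<^sub>E {0, 1}" "ones n t \<subseteq> S_set n m T"
  shows "((T, lam), t) \<in> f_map n ` LHS_dom n m"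
proof -
  have plam: "is_partition n lam" and blam: "bounded_by lam (2 * m)" and elam: "even_partition lam"
    and TS: "T \<in> SSYT lam n" using R(1) by (auto simp: even_tabs_def)
  have llam: "length lam = n" using plam by (simp add: is_partition_def)
  have gT: "good n T" and mT: "map length T = lam" using SSYT_iff[OF llam] TS by auto
  have lT: "length T = n" using gT by (simp add: good_def)
  have fo: "finite (ones n t)" "ones n t \<subseteq> {1..n}" by (auto simp: ones_def)
  define xs where "xs = sorted_list_of_set (ones n t)"
  have sx: "sorted_wrt (<) xs" and sxs: "set xs = ones n t" using sls_props[OF fo(1)] xs_def by auto
  have xsn: "set xs \<subseteq> {1..n}" using sxs fo(2) by simp
  define U where "U = insert_all T xs"
  define mu where "mu = map length U"
  have gU: "good n U" unfolding U_def by (rule good_insert_all[OF gT xsn])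
  have lU: "length U = n" using gU by (simp add: good_def)
  have lmu: "length mu = n" using lU mu_def by simp
  have IV: "\<forall>i<n. length (T ! i) \<le> length (U ! i) \<and> length (U ! i) \<le> Suc (length (T ! i))"
    using INV[OF gT sx xsn] U_def by simp
  have Tnth: "\<And>i. i < n \<Longrightarrow> length (T ! i) = lam ! i" using mT lT by (metis nth_map)
  have Unth: "\<And>i. i < n \<Longrightarrow> mu ! i = length (U ! i)" using mu_def lU by simp
  have US: "U \<in> SSYT mu n" using SSYT_iff[OF lmu] gU mu_def by simp
  have pmu: "is_partition n mu" unfolding is_partition_def
  proof (intro conjI allI impI)
    show "length mu = n" by (rule lmu)
    fix i assume i: "Suc i < n"
    have "domr (U ! i) (U ! Suc i)" using gU i lU by (simp add: good_def ssyt_def)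
    then show "mu ! Suc i \<le> mu ! i" using Unth[OF i] Unth[of i] i by (simp add: domr_def)
  qed
  have lam0: "lam ! 0 \<le> 2 * m" using blam llam n by (simp add: bounded_by_def)
  have mu0: "mu ! 0 \<le> 2 * m"
  proof (cases "m = 0")
    case True
    then have "ones n t = {}" using R(3) by (simp add: S_set_def)
    then have "xs = []" using xs_def by simp
    then show ?thesis using U_def Unth[OF n] Tnth[OF n] lam0 by simp
  next
    case m0: False
    show ?thesis
    proof (cases "lam ! 0 < 2 * m")
      case True
      have "even (lam ! 0)" using elam llam n by (simp add: even_partition_def)
      then have "lam ! 0 + 2 \<le> 2 * m" using True by presburger
      then show ?thesis using IV n Unth[OF n] Tnth[OF n] by fastforce
    next
      case False
      then have l2: "length (T ! 0) = 2 * m" using lam0 Tnth[OF n] by simp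
      then have Tne: "T ! 0 \<noteq> []" "T \<noteq> []" using m0 lT n by auto
      have last0: "last (T ! 0) = T ! 0 ! (2 * m - 1)" using Tne l2 by (simp add: last_conv_nth)
      have S: "S_set n m T = {T ! 0 ! (2 * m - 1) + 1 .. n}" using m0 l2 by (simp add: S_set_def)
      have "\<forall>x \<in> set xs. last (T ! 0) < x" using sxs R(3) S last0 by auto
      then have "length (U ! 0) = length (T ! 0)"
        unfolding U_def by (rule row0_keep[OF gT sx xsn Tne(2) Tne(1)])
      then show ?thesis using Unth[OF n] l2 by simp
    qed
  qed
  have bmu: "bounded_by mu (2 * m)" unfolding bounded_by_def
    using partition_le0[OF pmu] mu0 lmu by (meson le_trans)
  have inL: "(U, mu) \<in> LHS_dom n m" using pmu bmu US by (simp add: LHS_dom_def)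
  have ep: "lam = even_part_of mu"
  proof (rule nth_equalityI)
    show "length lam = length (even_part_of mu)" using llam lmu by (simp add: even_part_of_def)
  next
    fix i assume "i < length lam"
    then have i: "i < n" using llam by simp
    have ev: "even (lam ! i)" using elam llam i by (simp add: even_partition_def)
    have "mu ! i = lam ! i \<or> mu ! i = Suc (lam ! i)" using IV i Unth[OF i] Tnth[OF i] by fastforce
    then have "2 * (mu ! i div 2) = lam ! i" using ev by (auto elim: evenE)
    then show "lam ! i = even_part_of mu ! i" using i lmu by (simp add: even_part_of_def)
  qed
  have "f_map n (U, mu) = ((T, lam), t)"
    by (rule fmap_eq[OF lmu ep TS R(2)]) (simp add: U_def xs_def)
  then show ?thesis using inL by (metis image_eqI)
qed


lemma S_sub: "S_set n m T \<subseteq> {1..n}" by (auto simp: S_set_def)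

lemma bij_part:
  "\<exists>g. bij_betw g
     {((T, lam), t). (T, lam) \<in> even_tabs n m \<and> t \<in> {1..n} \<rightarrow>\<^sub>E {0, 1} \<and> ones n t \<subseteq> S_set n m T}
     (SIGMA Tl : even_tabs n m. S_set n m (fst Tl) \<rightarrow>\<^sub>E {0::nat, 1})"
proof -
  let ?R = "{((T, lam), t). (T, lam) \<in> even_tabs n m \<and> t \<in> {1..n} \<rightarrow>\<^sub>E {0::nat, 1} \<and> ones n t \<subseteq> S_set n m T}"
  let ?B = "SIGMA Tl : even_tabs n m. S_set n m (fst Tl) \<rightarrow>\<^sub>E {0::nat, 1}"
  define g :: "(nat list list \<times> nat list) \<times> (nat \<Rightarrow> nat) \<Rightarrow> (nat list list \<times> nat list) \<times> (nat \<Rightarrow> nat)"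
    where "g = (\<lambda>p. (fst p, restrict (snd p) (S_set n m (fst (fst p)))))"
  define h :: "(nat list list \<times> nat list) \<times> (nat \<Rightarrow> nat) \<Rightarrow> (nat list list \<times> nat list) \<times> (nat \<Rightarrow> nat)"
    where "h = (\<lambda>q. (fst q, \<lambda>i. if i \<in> {1..n} then (if i \<in> S_set n m (fst (fst q)) then snd q i else 0) else undefined))"
  have "bij_betw g ?R ?B"
  proof (rule bij_betw_byWitness[where f' = h])
    show "\<forall>a\<in>?R. h (g a) = a"
    proof
      fix a assume a: "a \<in> ?R"
      obtain T lam t where ad: "a = ((T, lam), t)" by (metis prod.collapse)
      have tP: "t \<in> {1..n} \<rightarrow>\<^sub>E {0, 1}" and sub: "ones n t \<subseteq> S_set n m T" using a ad by auto
      have "(\<lambda>i. if i \<in> {1..n} then (if i \<in> S_set n m T then t i else 0) else undefined) = t"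
      proof
        fix i
        show "(if i \<in> {1..n} then (if i \<in> S_set n m T then t i else 0) else undefined) = t i"
        proof (cases "i \<in> {1..n}")
          case True
          show ?thesis
          proof (cases "i \<in> S_set n m T")
            case False
            then have "i \<notin> ones n t" using sub by blast
            then have "t i \<noteq> 1" using True by (simp add: ones_def)
            moreover have "t i \<in> {0, 1}" using PiE_mem[OF tP True] by simp
            ultimately show ?thesis using True False by simp
          qed (use True in simp)
        next
          case False
          then show ?thesis unfolding if_not_P[OF False] using PiE_arb[OF tP False] by simp
        qed
      qed
      then show "h (g a) = a" using ad by (simp add: g_def h_def restrict_def cong: if_cong)
    qed
  next
    show "\<forall>b\<in>?B. g (h b) = b"
    proof
      fix b assume b: "b \<in> ?B"
      obtain Tl s where bd: "b = (Tl, s)" by (metis prod.collapse)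
      have sP: "s \<in> S_set n m (fst Tl) \<rightarrow>\<^sub>E {0, 1}" using b bd by auto
      have "restrict (\<lambda>i. if i \<in> {1..n} then (if i \<in> S_set n m (fst Tl) then s i else 0) else undefined) (S_set n m (fst Tl)) = s"
      proof
        fix i
        show "restrict (\<lambda>i. if i \<in> {1..n} then (if i \<in> S_set n m (fst Tl) then s i else 0) else undefined) (S_set n m (fst Tl)) i = s i"
        proof (cases "i \<in> S_set n m (fst Tl)")
          case True
          then have "i \<in> {1..n}" using S_sub by blast
          then show ?thesis using True by simp
        next
          case False
          then show ?thesis using PiE_arb[OF sP False] by simp
        qed
      qed
      note X = this
      show "g (h b) = b" unfolding bd g_def h_def fst_conv snd_conv using X by simp
    qed
  next
    show "g ` ?R \<subseteq> ?B"
    proof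
      fix y assume "y \<in> g ` ?R"
      then obtain a where a: "a \<in> ?R" and y: "y = g a" by blast
      obtain T lam t where ad: "a = ((T, lam), t)" by (metis prod.collapse)
      have et: "(T, lam) \<in> even_tabs n m" and tP: "t \<in> {1..n} \<rightarrow>\<^sub>E {0, 1}" using a ad by auto
      have "t \<in> Pi (S_set n m T) (\<lambda>_. {0, 1})"
      proof
        fix x assume "x \<in> S_set n m T"
        then have "x \<in> {1..n}" using S_sub by blast
        then show "t x \<in> {0, 1}" using PiE_mem[OF tP] by blast
      qed
      then have "restrict t (S_set n m T) \<in> S_set n m T \<rightarrow>\<^sub>E {0, 1}" by simp
      then show "y \<in> ?B" using y ad et by (simp add: g_def)
    qed
  next
    show "h ` ?B \<subseteq> ?R"
    proof
      fix y assume "y \<in> h ` ?B"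
      then obtain b where b: "b \<in> ?B" and y: "y = h b" by blast
      obtain T lam s where bd: "b = ((T, lam), s)" by (metis prod.collapse)
      have et: "(T, lam) \<in> even_tabs n m" and sP: "s \<in> S_set n m T \<rightarrow>\<^sub>E {0, 1}" using b bd by auto
      define t where "t = (\<lambda>i. if i \<in> {1..n} then (if i \<in> S_set n m T then s i else 0) else (undefined :: nat))"
      have tP: "t \<in> {1..n} \<rightarrow>\<^sub>E {0, 1}"
        unfolding PiE_def extensional_def Pi_def t_def using PiE_mem[OF sP] by auto
      have "ones n t \<subseteq> S_set n m T"
      proof
        fix i assume "i \<in> ones n t"
        then have "i \<in> {1..n}" "t i = 1" by (auto simp: ones_def)
        then show "i \<in> S_set n m T" by (cases "i \<in> S_set n m T") (auto simp: t_def)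
      qed
      moreover have "y = ((T, lam), t)" unfolding y bd h_def fst_conv snd_conv t_def by (rule refl)
      ultimately show "y \<in> ?R" using et tP by simp
    qed
  qed
  then show ?thesis by blast
qed

theorem proposition3p16:
  fixes n m :: nat
  assumes "n > 0"
  shows "f_map n ` LHS_dom n m =
           {((T, lam), t). (T, lam) \<in> even_tabs n m \<and> t \<in> {1..n} \<rightarrow>\<^sub>E {0, 1}
              \<and> ones n t \<subseteq> S_set n m T}
       \<and> (\<exists>g. bij_betw g
           {((T, lam), t). (T, lam) \<in> even_tabs n m \<and> t \<in> {1..n} \<rightarrow>\<^sub>E {0, 1}
              \<and> ones n t \<subseteq> S_set n m T}
           (SIGMA Tl : even_tabs n m. S_set n m (fst Tl) \<rightarrow>\<^sub>E {0::nat, 1}))"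
proof (rule conjI)
  show "f_map n ` LHS_dom n m =
           {((T, lam), t). (T, lam) \<in> even_tabs n m \<and> t \<in> {1..n} \<rightarrow>\<^sub>E {0, 1}
              \<and> ones n t \<subseteq> S_set n m T}"
  proof
    show "f_map n ` LHS_dom n m \<subseteq> {((T, lam), t). (T, lam) \<in> even_tabs n m \<and> t \<in> {1..n} \<rightarrow>\<^sub>E {0, 1}
              \<and> ones n t \<subseteq> S_set n m T}"
    proof
      fix y assume "y \<in> f_map n ` LHS_dom n m"
      then obtain p where p: "p \<in> LHS_dom n m" and y: "y = f_map n p" by blast
      obtain U mu where pd: "p = (U, mu)" by (metis prod.collapse)
      show "y \<in> {((T, lam), t). (T, lam) \<in> even_tabs n m \<and> t \<in> {1..n} \<rightarrow>\<^sub>E {0, 1}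
              \<and> ones n t \<subseteq> S_set n m T}"
        using part_sub[OF assms, of U mu m] p pd y by simp
    qed
  next
    show "{((T, lam), t). (T, lam) \<in> even_tabs n m \<and> t \<in> {1..n} \<rightarrow>\<^sub>E {0, 1}
              \<and> ones n t \<subseteq> S_set n m T} \<subseteq> f_map n ` LHS_dom n m"
    proof
      fix y assume y: "y \<in> {((T, lam), t). (T, lam) \<in> even_tabs n m \<and> t \<in> {1..n} \<rightarrow>\<^sub>E {0, 1}
              \<and> ones n t \<subseteq> S_set n m T}"
      obtain T lam t where yd: "y = ((T, lam), t)" by (metis prod.collapse)
      have "(T, lam) \<in> even_tabs n m" "t \<in> {1..n} \<rightarrow>\<^sub>E {0, 1}" "ones n t \<subseteq> S_set n m T"
        using y yd by auto
      then show "y \<in> f_map n ` LHS_dom n m" using part_sup[OF assms] yd by blast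
    qed
  qed
next
  show "\<exists>g. bij_betw g
           {((T, lam), t). (T, lam) \<in> even_tabs n m \<and> t \<in> {1..n} \<rightarrow>\<^sub>E {0, 1}
              \<and> ones n t \<subseteq> S_set n m T}
           (SIGMA Tl : even_tabs n m. S_set n m (fst Tl) \<rightarrow>\<^sub>E {0::nat, 1})"
    by (rule bij_part)
qed


end
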